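(* Let $0<\delta<1$ and let $Z=(Z_1,\dots,Z_k)$ be, given the database $X=(X_1,\dots,X_n)$, $k$ i.i.d. draws from the smoothed histogram density $\hat f_{m,\delta}(x)=(1-\delta)\hat f_m(x)+\delta$ on $[0,1]^r$. If $$k\log\Big(\frac{(1-\delta)m}{n\delta}+1\Big)\le\alpha,$$ then the resulting mechanism $Q_n(\cdot\mid X)$ satisfies $\alpha$-differential privacy.
   Context: Let $r\ge 1$ and $\mathcal X=[0,1]^r$. A database is $x=(x_1,\dots,x_n)\in\mathcal X^n$; the Hamming distance is $\delta(x,y)=\#\{i:x_i\ne y_i\}$. A data release mechanism is a Markov kernel $Q_n(\cdot\mid X=x)$ on $\mathcal X^k$; for $\alpha\ge0$ it satisfies $\alpha$-differential privacy if $Q_n(B\mid X=x)\le e^{\alpha}Q_n(B\mid X=y)$ for all measurable $B\subseteq\mathcal X^k$ and all $x,y$ with $\delta(x,y)=1$. Histogram: let $0<h<1$ be a binwidth with $m=h^{-r}$ an integer, and partition $[0,1]^r$ into $m$ cubes $B_1,\dots,B_m$ of side $h$. Let $C_j=\sum_{i=1}^n I(X_i\in B_j)$, $\hat p_j=C_j/n$, and $\hat f_m(x)=\sum_{j=1}^m (\hat p_j/h^r)I(x\in B_j)$. *)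

theory Defs
  imports "HOL-Probability.Probability"
begin

text \<open>The binwidth is h = 1/N for an integer N \<ge> 2 (so that [0,1]^r is partitioned
  into m = N^r cubes of side h).  Databases are functions nat \<Rightarrow> real^'r, of which
  only the entries with index i < n matter.\<close>

definition unit_cube :: "(real ^ 'r) set" where
  "unit_cube = cbox 0 One"

text \<open>Index of the bin containing z: the j-th coordinate of the bin index is
  floor(N z_j), clipped to N-1 so that the point 1 belongs to the last bin.\<close>
definition bin_index :: "nat \<Rightarrow> real ^ 'r \<Rightarrow> ('r \<Rightarrow> nat)" where
  "bin_index N z = (\<lambda>j. min (N - 1) (nat \<lfloor>z $ j * real N\<rfloor>))"

definition hist_count :: "nat \<Rightarrow> nat \<Rightarrow> (nat \<Rightarrow> real ^ 'r) \<Rightarrow> real ^ 'r \<Rightarrow> nat" where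
  "hist_count N n x z = card {i \<in> {..<n}. bin_index N (x i) = bin_index N z}"

definition hist_density :: "nat \<Rightarrow> nat \<Rightarrow> (nat \<Rightarrow> real ^ 'r) \<Rightarrow> real ^ 'r \<Rightarrow> real" where
  "hist_density N n x z =
     (if z \<in> unit_cube then (real (hist_count N n x z) / real n) / (1 / real N) ^ CARD('r) else 0)"

definition smoothed_hist_density ::
    "real \<Rightarrow> nat \<Rightarrow> nat \<Rightarrow> (nat \<Rightarrow> real ^ 'r) \<Rightarrow> real ^ 'r \<Rightarrow> real" where
  "smoothed_hist_density \<delta> N n x z =
     (if z \<in> unit_cube then (1 - \<delta>) * hist_density N n x z + \<delta> else 0)"

definition hist_mechanism ::
    "real \<Rightarrow> nat \<Rightarrow> nat \<Rightarrow> nat \<Rightarrow> (nat \<Rightarrow> real ^ 'r) \<Rightarrow> (nat \<Rightarrow> real ^ 'r) measure" where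
  "hist_mechanism \<delta> N n k x =
     PiM {..<k} (\<lambda>_. density lborel (\<lambda>z. ennreal (smoothed_hist_density \<delta> N n x z)))"

definition hamming :: "nat \<Rightarrow> (nat \<Rightarrow> 'a) \<Rightarrow> (nat \<Rightarrow> 'a) \<Rightarrow> nat" where
  "hamming n x y = card {i \<in> {..<n}. x i \<noteq> y i}"

definition differentially_private ::
    "real \<Rightarrow> nat \<Rightarrow> ((nat \<Rightarrow> real ^ 'r) \<Rightarrow> 'b measure) \<Rightarrow> bool" where
  "differentially_private \<alpha> n Q \<longleftrightarrow>
     (\<forall>x y. (\<forall>i<n. x i \<in> unit_cube) \<longrightarrow> (\<forall>i<n. y i \<in> unit_cube) \<longrightarrow> hamming n x y = 1 \<longrightarrow>
        (\<forall>B \<in> sets (Q x). measure (Q x) B \<le> exp \<alpha> * measure (Q y) B))"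

end

theory Submission
  imports Defs
begin

lemma bin_pred[measurable]: "Measurable.pred borel (\<lambda>z::real^'r. b = bin_index N z)"
  unfolding bin_index_def fun_eq_iff
  by measurable
lemma hc_sum: "real (hist_count N n x z) = (\<Sum>i<n. if bin_index N (x i) = bin_index N z then 1 else 0)"
  unfolding hist_count_def by (simp add: sum.If_cases Int_def)
lemma meas[measurable]: "(\<lambda>z::real^'r. smoothed_hist_density \<delta> N n x z) \<in> borel_measurable borel"
  unfolding smoothed_hist_density_def hist_density_def hc_sum unit_cube_def
  by measurable

lemma PiM_density:
  fixes f :: "'a \<Rightarrow> ennreal"
  assumes sM: "sigma_finite_measure M" and fm[measurable]: "f \<in> borel_measurable M" and I: "finite I"
    and sD: "sigma_finite_measure (density M f)"
  shows "PiM I (\<lambda>_. density M f) = density (PiM I (\<lambda>_. M)) (\<lambda>\<omega>. \<Prod>i\<in>I. f (\<omega> i))"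
proof -
  interpret A: product_sigma_finite "\<lambda>_. M" by (simp add: product_sigma_finite_def sM)
  interpret B: product_sigma_finite "\<lambda>_. density M f" by (simp add: product_sigma_finite_def sD)
  have sets_eq: "sets (PiM I (\<lambda>_. density M f)) = sets (PiM I (\<lambda>_. M))"
    by (rule sets_PiM_cong) auto
  show ?thesis
  proof (rule B.PiM_eqI[symmetric, OF I])
    show "sets (density (PiM I (\<lambda>_. M)) (\<lambda>\<omega>. \<Prod>i\<in>I. f (\<omega> i))) = sets (PiM I (\<lambda>_. density M f))"
      using sets_eq by simp
  next
    fix A assume A: "\<And>i. i \<in> I \<Longrightarrow> A i \<in> sets (density M f)"
    then have A': "\<And>i. i \<in> I \<Longrightarrow> A i \<in> sets M" by simp
    have PA: "Pi\<^sub>E I A \<in> sets (PiM I (\<lambda>_. M))"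
      using A' by (intro sets_PiM_I_finite I) auto
    have "emeasure (density (PiM I (\<lambda>_. M)) (\<lambda>\<omega>. \<Prod>i\<in>I. f (\<omega> i))) (Pi\<^sub>E I A)
        = (\<integral>\<^sup>+\<omega>. (\<Prod>i\<in>I. f (\<omega> i)) * indicator (Pi\<^sub>E I A) \<omega> \<partial>PiM I (\<lambda>_. M))"
      using PA by (subst emeasure_density) auto
    also have "\<dots> = (\<integral>\<^sup>+\<omega>. (\<Prod>i\<in>I. f (\<omega> i) * indicator (A i) (\<omega> i)) \<partial>PiM I (\<lambda>_. M))"
    proof (rule nn_integral_cong)
      fix \<omega> assume "\<omega> \<in> space (PiM I (\<lambda>_. M))"
      then have ext: "\<omega> \<in> extensional I" by (auto simp: space_PiM PiE_def)
      have "indicator (Pi\<^sub>E I A) \<omega> = (\<Prod>i\<in>I. indicator (A i) (\<omega> i) :: ennreal)"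
        using ext I by (auto simp: indicator_def PiE_def Pi_def extensional_def)
      then show "(\<Prod>i\<in>I. f (\<omega> i)) * indicator (Pi\<^sub>E I A) \<omega> = (\<Prod>i\<in>I. f (\<omega> i) * indicator (A i) (\<omega> i))"
        by (simp add: prod.distrib)
    qed
    also have "\<dots> = (\<Prod>i\<in>I. \<integral>\<^sup>+z. f z * indicator (A i) z \<partial>M)"
      using A' by (intro A.product_nn_integral_prod I) auto
    also have "\<dots> = (\<Prod>i\<in>I. emeasure (density M f) (A i))"
      using A' by (intro prod.cong refl) (simp add: emeasure_density)
    finally show "emeasure (density (PiM I (\<lambda>_. M)) (\<lambda>\<omega>. \<Prod>i\<in>I. f (\<omega> i))) (Pi\<^sub>E I A) = (\<Prod>i\<in>I. emeasure (density M f) (A i))" .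
  qed
qed

lemma hc_le: "hist_count N n x z \<le> n"
  unfolding hist_count_def by (metis (no_types, lifting) card_lessThan card_mono finite_lessThan mem_Collect_eq subsetI)

lemma hc_diff:
  assumes "hamming n x y = 1"
  shows "hist_count N n x z \<le> hist_count N n y z + 1"
proof -
  have "{i \<in> {..<n}. bin_index N (x i) = bin_index N z} \<subseteq>
        {i \<in> {..<n}. bin_index N (y i) = bin_index N z} \<union> {i \<in> {..<n}. x i \<noteq> y i}" by auto
  then have "hist_count N n x z \<le> card ({i \<in> {..<n}. bin_index N (y i) = bin_index N z} \<union> {i \<in> {..<n}. x i \<noteq> y i})"
    unfolding hist_count_def by (intro card_mono) auto
  also have "\<dots> \<le> hist_count N n y z + hamming n x y"
    unfolding hist_count_def hamming_def by (rule card_Un_le)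
  finally show ?thesis using assms by simp
qed

lemma sm_eq:
  fixes z :: "real ^ 'r" and x :: "nat \<Rightarrow> real ^ 'r"
  assumes "z \<in> unit_cube" "N \<ge> 1"
  shows "smoothed_hist_density \<delta> N n x z = (1 - \<delta>) * real (N ^ CARD('r)) / real n * real (hist_count N n x z) + \<delta>"
  using assms unfolding smoothed_hist_density_def hist_density_def
  by (simp add: power_one_over field_simps)

lemma ratio:
  fixes a c c' \<delta> :: real
  assumes "0 < \<delta>" "0 \<le> a" "0 \<le> c" "c' \<le> c + 1"
  shows "a * c' + \<delta> \<le> (a / \<delta> + 1) * (a * c + \<delta>)"
proof -
  have "(a / \<delta> + 1) * (a * c + \<delta>) = (a/\<delta>) * (a*c) + a + a * c + \<delta>"
    using assms by (simp add: field_simps)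
  moreover have "(a/\<delta>) * (a*c) \<ge> 0" using assms by simp
  moreover have "a * c' \<le> a * (c + 1)" using assms by (intro mult_left_mono) auto
  ultimately show ?thesis by (simp add: algebra_simps)
qed

lemma fin_dens:
  fixes g :: "real ^ 'r \<Rightarrow> real"
  assumes gm: "g \<in> borel_measurable borel" and g0: "\<And>z. 0 \<le> g z"
    and gb: "\<And>z. g z \<le> C * indicator unit_cube z"
  shows "finite_measure (density lborel (\<lambda>z. ennreal (g z)))"
proof (rule finite_measureI)
  have cm: "(unit_cube :: (real^'r) set) \<in> sets lborel" unfolding unit_cube_def by simp
  have "emeasure (density lborel (\<lambda>z. ennreal (g z))) (space (density lborel (\<lambda>z. ennreal (g z))))
      = (\<integral>\<^sup>+z. ennreal (g z) \<partial>lborel)"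
    using gm by (simp add: emeasure_density)
  also have "\<dots> \<le> (\<integral>\<^sup>+z. ennreal C * indicator (unit_cube :: (real^'r) set) z \<partial>lborel)"
  proof (rule nn_integral_mono)
    fix z show "ennreal (g z) \<le> ennreal C * indicator unit_cube z"
      using gb[of z] g0[of z] by (cases "z \<in> unit_cube") (auto intro: ennreal_leI)
  qed
  also have "\<dots> = ennreal C * emeasure lborel (unit_cube :: (real^'r) set)"
    using cm by (simp add: nn_integral_cmult_indicator)
  also have "\<dots> < \<infinity>"
    unfolding unit_cube_def using emeasure_lborel_cbox_finite[of "0::real^'r" One]
    by (simp add: ennreal_mult_less_top)
  finally show "emeasure (density lborel (\<lambda>z. ennreal (g z))) (space (density lborel (\<lambda>z. ennreal (g z)))) \<noteq> \<infinity>"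
    by simp
qed

lemma sm_nonneg:
  fixes z :: "real ^ 'r" and x :: "nat \<Rightarrow> real ^ 'r"
  assumes "0 < \<delta>" "\<delta> < 1" "N \<ge> 1"
  shows "0 \<le> smoothed_hist_density \<delta> N n x z"
proof (cases "z \<in> unit_cube")
  case True
  then show ?thesis using assms by (simp add: sm_eq[OF True assms(3)])
qed (simp add: smoothed_hist_density_def)

lemma sm_bound:
  fixes z :: "real ^ 'r" and x :: "nat \<Rightarrow> real ^ 'r"
  assumes "0 < \<delta>" "\<delta> < 1" "N \<ge> 1" "n \<ge> 1"
  shows "smoothed_hist_density \<delta> N n x z \<le> (real (N ^ CARD('r)) + 1) * indicator unit_cube z"
proof (cases "z \<in> unit_cube")
  case True
  define m where "m = real (N ^ CARD('r))"
  define c where "c = real (hist_count N n x z)"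
  have c: "c \<le> real n" "0 \<le> c" unfolding c_def using hc_le[of N n x z] by auto
  have m0: "0 \<le> m" unfolding m_def by simp
  have "(1 - \<delta>) * m / real n * c \<le> 1 * m / real n * real n"
    using assms c m0 by (intro mult_mono divide_right_mono mult_right_mono) auto
  also have "\<dots> = m" using assms by simp
  finally have h: "(1 - \<delta>) * m / real n * c \<le> m" .
  have "smoothed_hist_density \<delta> N n x z = (1 - \<delta>) * m / real n * c + \<delta>"
    using True assms by (simp add: sm_eq m_def c_def)
  also have "\<dots> \<le> m + 1" using h assms by simp
  finally show ?thesis using True by (simp add: m_def)
next
  case False then show ?thesis by (simp add: smoothed_hist_density_def)
qed

theorem mainTheorem4:
  fixes \<delta> \<alpha> :: real and N n k :: nat
  assumes "0 < \<delta>" and "\<delta> < 1"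
    and "N \<ge> 2" and "n \<ge> 1"
    and "real k * ln ((1 - \<delta>) * real (N ^ CARD('r)) / (real n * \<delta>) + 1) \<le> \<alpha>"
  shows "differentially_private \<alpha> n
           (hist_mechanism \<delta> N n k :: (nat \<Rightarrow> real ^ 'r) \<Rightarrow> (nat \<Rightarrow> real ^ 'r) measure)"
  unfolding differentially_private_def
proof (intro allI impI ballI)
  fix x y :: "nat \<Rightarrow> real ^ 'r" and B
  assume hxy: "hamming n x y = 1"
  assume B: "B \<in> sets (hist_mechanism \<delta> N n k x)"
  have N1: "N \<ge> 1" using assms by simp
  define m where "m = real (N ^ CARD('r))"
  define a where "a = (1 - \<delta>) * m / real n"
  define L where "L = (1 - \<delta>) * m / (real n * \<delta>) + 1"
  have a0: "0 \<le> a" unfolding a_def m_def using assms by simp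
  have La: "L = a / \<delta> + 1" unfolding L_def a_def by simp
  have L1: "1 \<le> L" using a0 assms La by simp
  define sx where "sx = smoothed_hist_density \<delta> N n x"
  define sy where "sy = smoothed_hist_density \<delta> N n y"
  have sx0: "\<And>z. 0 \<le> sx z" and sy0: "\<And>z. 0 \<le> sy z"
    unfolding sx_def sy_def using sm_nonneg[OF assms(1,2) N1] by auto
  have pt: "sx z \<le> L * sy z" for z
  proof (cases "z \<in> unit_cube")
    case True
    have "real (hist_count N n x z) \<le> real (hist_count N n y z) + 1"
      using hc_diff[OF hxy, of N z] by linarith
    then show ?thesis unfolding sx_def sy_def La
      using True N1 ratio[OF assms(1) a0, of "real (hist_count N n y z)" "real (hist_count N n x z)"]
      by (simp add: sm_eq a_def m_def)
  next
    case False then show ?thesis by (simp add: sx_def sy_def smoothed_hist_density_def)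
  qed
  have mx[measurable]: "sx \<in> borel_measurable borel" and my[measurable]: "sy \<in> borel_measurable borel"
    unfolding sx_def sy_def by (rule meas)+
  have fin: "finite_measure (density lborel (\<lambda>z. ennreal (s z)))" if "s = sx \<or> s = sy" for s
    using that
  proof (elim disjE)
    assume "s = sx" then show ?thesis
      by (simp add: sx_def, intro fin_dens[where C="real (N ^ CARD('r)) + 1"] meas sm_nonneg sm_bound assms N1)
  next
    assume "s = sy" then show ?thesis
      by (simp add: sy_def, intro fin_dens[where C="real (N ^ CARD('r)) + 1"] meas sm_nonneg sm_bound assms N1)
  qed
  have sf: "sigma_finite_measure (density lborel (\<lambda>z. ennreal (s z)))" if "s = sx \<or> s = sy" for s
    using fin[OF that] by (simp add: finite_measure_def)
  have Q: "hist_mechanism \<delta> N n k w = density (PiM {..<k} (\<lambda>_. lborel)) (\<lambda>\<omega>. \<Prod>i\<in>{..<k}. ennreal (s (\<omega> i)))"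
    if "s = sx \<or> s = sy" "s = smoothed_hist_density \<delta> N n w" for s w
    unfolding hist_mechanism_def that(2)[symmetric]
    using that(1) by (intro PiM_density sf lborel.sigma_finite_measure_axioms) (auto simp: sx_def sy_def)
  have Qx: "hist_mechanism \<delta> N n k x = density (PiM {..<k} (\<lambda>_. lborel)) (\<lambda>\<omega>. \<Prod>i\<in>{..<k}. ennreal (sx (\<omega> i)))"
    by (rule Q) (auto simp: sx_def)
  have Qy: "hist_mechanism \<delta> N n k y = density (PiM {..<k} (\<lambda>_. lborel)) (\<lambda>\<omega>. \<Prod>i\<in>{..<k}. ennreal (sy (\<omega> i)))"
    by (rule Q) (auto simp: sy_def)
  have B': "B \<in> sets (PiM {..<k} (\<lambda>_. lborel))" using B Qx by simp
  have "emeasure (hist_mechanism \<delta> N n k x) B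
      = (\<integral>\<^sup>+\<omega>. (\<Prod>i\<in>{..<k}. ennreal (sx (\<omega> i))) * indicator B \<omega> \<partial>PiM {..<k} (\<lambda>_. lborel))"
    unfolding Qx using B' by (subst emeasure_density) auto
  also have "\<dots> \<le> (\<integral>\<^sup>+\<omega>. ennreal (L ^ k) * ((\<Prod>i\<in>{..<k}. ennreal (sy (\<omega> i))) * indicator B \<omega>) \<partial>PiM {..<k} (\<lambda>_. lborel))"
  proof (rule nn_integral_mono)
    fix \<omega> :: "nat \<Rightarrow> real ^ 'r"
    have "(\<Prod>i\<in>{..<k}. sx (\<omega> i)) \<le> (\<Prod>i\<in>{..<k}. L * sy (\<omega> i))"
      using sx0 pt by (intro prod_mono) auto
    also have "\<dots> = L ^ k * (\<Prod>i\<in>{..<k}. sy (\<omega> i))"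
      by (simp add: prod.distrib)
    finally have "ennreal (\<Prod>i\<in>{..<k}. sx (\<omega> i)) \<le> ennreal (L ^ k) * ennreal (\<Prod>i\<in>{..<k}. sy (\<omega> i))"
      using L1 sy0 by (simp add: ennreal_mult[symmetric] prod_nonneg ennreal_leI)
    then have "(\<Prod>i\<in>{..<k}. ennreal (sx (\<omega> i))) \<le> ennreal (L ^ k) * (\<Prod>i\<in>{..<k}. ennreal (sy (\<omega> i)))"
      using sx0 sy0 by (simp add: prod_ennreal)
    then show "(\<Prod>i\<in>{..<k}. ennreal (sx (\<omega> i))) * indicator B \<omega> \<le> ennreal (L ^ k) * ((\<Prod>i\<in>{..<k}. ennreal (sy (\<omega> i))) * indicator B \<omega>)"
      by (cases "\<omega> \<in> B") (auto simp: mult.assoc)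
  qed
  also have "\<dots> = ennreal (L ^ k) * (\<integral>\<^sup>+\<omega>. (\<Prod>i\<in>{..<k}. ennreal (sy (\<omega> i))) * indicator B \<omega> \<partial>PiM {..<k} (\<lambda>_. lborel))"
  proof (intro nn_integral_cmult)
    have B'': "B \<in> sets (PiM {..<k} (\<lambda>_. borel))"
    proof -
      have eq: "sets (PiM {..<k} (\<lambda>_. lborel::(real^'r) measure)) = sets (PiM {..<k} (\<lambda>_. borel))"
        by (rule sets_PiM_cong) simp_all
      show ?thesis using B' eq by blast
    qed
    have "(\<lambda>\<omega>. (\<Prod>i\<in>{..<k}. ennreal (sy (\<omega> i))) * indicator B \<omega>) \<in> borel_measurable (PiM {..<k} (\<lambda>_. borel))"
      using B'' by measurable
    then show "(\<lambda>\<omega>. (\<Prod>i\<in>{..<k}. ennreal (sy (\<omega> i))) * indicator B \<omega>) \<in> borel_measurable (PiM {..<k} (\<lambda>_. lborel))"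
      by (simp add: measurable_cong_sets[OF sets_PiM_cong[OF refl sets_lborel] refl])
  qed
  also have "\<dots> = ennreal (L ^ k) * emeasure (hist_mechanism \<delta> N n k y) B"
    unfolding Qy using B' by (subst emeasure_density) auto
  finally have le: "emeasure (hist_mechanism \<delta> N n k x) B \<le> ennreal (L ^ k) * emeasure (hist_mechanism \<delta> N n k y) B" .
  have finy: "emeasure (hist_mechanism \<delta> N n k y) B < \<infinity>"
  proof -
    interpret P: product_sigma_finite "\<lambda>_. density lborel (\<lambda>z. ennreal (sy z))"
      using sf by (simp add: product_sigma_finite_def)
    have "emeasure (hist_mechanism \<delta> N n k y) B \<le> emeasure (hist_mechanism \<delta> N n k y) (space (hist_mechanism \<delta> N n k y))"
      using B' Qy by (intro emeasure_mono) (auto dest: sets.sets_into_space)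
    also have "space (hist_mechanism \<delta> N n k y) = Pi\<^sub>E {..<k} (\<lambda>_. UNIV)"
      unfolding hist_mechanism_def by (simp add: space_PiM sy_def)
    also have "emeasure (hist_mechanism \<delta> N n k y) (Pi\<^sub>E {..<k} (\<lambda>_. UNIV))
        = (\<Prod>i\<in>{..<k}. emeasure (density lborel (\<lambda>z. ennreal (sy z))) UNIV)"
      unfolding hist_mechanism_def sy_def[symmetric] by (rule P.emeasure_PiM) auto
    also have "\<dots> < \<infinity>"
    proof -
      interpret F: finite_measure "density lborel (\<lambda>z. ennreal (sy z))" using fin by simp
      have h: "emeasure (density lborel (\<lambda>z. ennreal (sy z))) UNIV < \<top>"
        unfolding less_top[symmetric] by (rule finite_measure.emeasure_finite[OF fin]) simp
      show ?thesis using h by (simp add: power_less_top_ennreal)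
    qed
    finally show ?thesis .
  qed
  have "measure (hist_mechanism \<delta> N n k x) B \<le> enn2real (ennreal (L ^ k) * emeasure (hist_mechanism \<delta> N n k y) B)"
    unfolding measure_def using le finy by (intro enn2real_mono) (auto simp: ennreal_mult_less_top)
  also have "\<dots> = L ^ k * measure (hist_mechanism \<delta> N n k y) B"
    using L1 by (simp add: enn2real_mult measure_def)
  also have "\<dots> \<le> exp \<alpha> * measure (hist_mechanism \<delta> N n k y) B"
  proof (rule mult_right_mono)
    have "L ^ k = exp (real k * ln L)" using L1 by (simp add: exp_of_nat_mult)
    also have "\<dots> \<le> exp \<alpha>" using assms(5) unfolding L_def m_def by simp
    finally show "L ^ k \<le> exp \<alpha>" .
  qed simp
  finally show "measure (hist_mechanism \<delta> N n k x) B \<le> exp \<alpha> * measure (hist_mechanism \<delta> N n k y) B" .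
qed

end
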